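(* Let $G$ be a finite group, $K$ an idempotent semifield, and $V$ an indecomposable representation of $G$ over $K$. Let $K[G]$ be the regular representation. Then there is a subgroup $H\subseteq G$ such that $V$ is isomorphic (as a representation) to the quotient of $K[G]$ by the $K[G]$-module congruence generated by $g\sim gh$ for all $g\in G$, $h\in H$.
   Context: All semirings are commutative. A semifield is a semiring whose nonzero elements form a multiplicative group; idempotent means $a+a=a$ for all $a$. A representation of $G$ over $K$ is a $K$-linear action of $G$ on a free module $K^n$ (equivalently a $K[G]$-module that is free of finite rank over $K$); it is indecomposable if it is not a direct sum of two nontrivial $G$-stable submodules. The regular representation is the group semiring $K[G]$ viewed as a module over itself. *)

theory Defs
  imports "HOL-Algebra.Group"
begin

class idem_semifield = comm_semiring_1 +
  assumes add_idem: "a + a = a"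
  and mult_inverse_ex: "a \<noteq> 0 \<Longrightarrow> \<exists>b. a * b = 1"

text \<open>Vectors of the free module K^n are functions from a finite index type to K.\<close>
definition vadd :: "('i \<Rightarrow> 'k::plus) \<Rightarrow> ('i \<Rightarrow> 'k) \<Rightarrow> ('i \<Rightarrow> 'k)" where
  "vadd u w = (\<lambda>i. u i + w i)"

definition vsmult :: "'k::times \<Rightarrow> ('i \<Rightarrow> 'k) \<Rightarrow> ('i \<Rightarrow> 'k)" where
  "vsmult c u = (\<lambda>i. c * u i)"

definition klinear :: "(('i \<Rightarrow> 'k::semiring_1) \<Rightarrow> ('j \<Rightarrow> 'k)) \<Rightarrow> bool" where
  "klinear f \<longleftrightarrow> (\<forall>u w. f (vadd u w) = vadd (f u) (f w)) \<and>
                  (\<forall>c u. f (vsmult c u) = vsmult c (f u))"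

definition is_rep :: "('g, 'b) monoid_scheme \<Rightarrow>
    ('g \<Rightarrow> ('n::finite \<Rightarrow> 'k::semiring_1) \<Rightarrow> ('n \<Rightarrow> 'k)) \<Rightarrow> bool" where
  "is_rep G \<rho> \<longleftrightarrow> (\<forall>g\<in>carrier G. klinear (\<rho> g)) \<and>
     (\<forall>v. \<rho> \<one>\<^bsub>G\<^esub> v = v) \<and>
     (\<forall>g\<in>carrier G. \<forall>h\<in>carrier G. \<forall>v. \<rho> (g \<otimes>\<^bsub>G\<^esub> h) v = \<rho> g (\<rho> h v))"

definition is_submodule :: "('n \<Rightarrow> 'k::semiring_1) set \<Rightarrow> bool" where
  "is_submodule U \<longleftrightarrow> (\<lambda>_. 0) \<in> U \<and> (\<forall>u\<in>U. \<forall>w\<in>U. vadd u w \<in> U) \<and>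
     (\<forall>c. \<forall>u\<in>U. vsmult c u \<in> U)"

definition G_stable :: "('g, 'b) monoid_scheme \<Rightarrow>
    ('g \<Rightarrow> ('n \<Rightarrow> 'k) \<Rightarrow> ('n \<Rightarrow> 'k)) \<Rightarrow> ('n \<Rightarrow> 'k) set \<Rightarrow> bool" where
  "G_stable G \<rho> U \<longleftrightarrow> (\<forall>g\<in>carrier G. \<forall>u\<in>U. \<rho> g u \<in> U)"

definition indecomposable :: "('g, 'b) monoid_scheme \<Rightarrow>
    ('g \<Rightarrow> ('n::finite \<Rightarrow> 'k::semiring_1) \<Rightarrow> ('n \<Rightarrow> 'k)) \<Rightarrow> bool" where
  "indecomposable G \<rho> \<longleftrightarrow>
     \<not> (\<exists>U W. is_submodule U \<and> is_submodule W \<and> G_stable G \<rho> U \<and> G_stable G \<rho> W \<and>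
            U \<noteq> {\<lambda>_. 0} \<and> W \<noteq> {\<lambda>_. 0} \<and>
            (\<forall>v. \<exists>u\<in>U. \<exists>w\<in>W. v = vadd u w) \<and>
            (\<forall>u\<in>U. \<forall>u'\<in>U. \<forall>w\<in>W. \<forall>w'\<in>W. vadd u w = vadd u' w' \<longrightarrow> u = u' \<and> w = w'))"

text \<open>The group semiring K[G] as K-valued functions supported on carrier G.\<close>
definition group_alg :: "('g, 'b) monoid_scheme \<Rightarrow> ('g \<Rightarrow> 'k::zero) set" where
  "group_alg G = {f. \<forall>x. x \<notin> carrier G \<longrightarrow> f x = 0}"

definition basis_elt :: "'g \<Rightarrow> ('g \<Rightarrow> 'k::{zero,one})" where
  "basis_elt g = (\<lambda>x. if x = g then 1 else 0)"

text \<open>Left regular action: g \<cdot> (\<Sum> a_x x) = \<Sum> a_x (g x).\<close>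
definition reg_act :: "('g, 'b) monoid_scheme \<Rightarrow> 'g \<Rightarrow> ('g \<Rightarrow> 'k::zero) \<Rightarrow> ('g \<Rightarrow> 'k)" where
  "reg_act G g f = (\<lambda>x. if x \<in> carrier G then f (inv\<^bsub>G\<^esub> g \<otimes>\<^bsub>G\<^esub> x) else 0)"

text \<open>The K[G]-module congruence on K[G] generated by g \<sim> g h (g \<in> G, h \<in> H):
  the least equivalence relation on K[G] containing these pairs and compatible with
  addition, K-scalars and the G-action (hence with multiplication by K[G]).\<close>
inductive coset_cong :: "('g, 'b) monoid_scheme \<Rightarrow> 'g set \<Rightarrow>
    ('g \<Rightarrow> 'k::semiring_1) \<Rightarrow> ('g \<Rightarrow> 'k) \<Rightarrow> bool"
  for G H where
  gen: "g \<in> carrier G \<Longrightarrow> h \<in> H \<Longrightarrow> coset_cong G H (basis_elt g) (basis_elt (g \<otimes>\<^bsub>G\<^esub> h))"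
| refl: "f \<in> group_alg G \<Longrightarrow> coset_cong G H f f"
| sym: "coset_cong G H f f' \<Longrightarrow> coset_cong G H f' f"
| trans: "coset_cong G H f f' \<Longrightarrow> coset_cong G H f' f'' \<Longrightarrow> coset_cong G H f f''"
| add: "coset_cong G H f f' \<Longrightarrow> e \<in> group_alg G \<Longrightarrow> coset_cong G H (vadd f e) (vadd f' e)"
| smult: "coset_cong G H f f' \<Longrightarrow> coset_cong G H (vsmult c f) (vsmult c f')"
| act: "coset_cong G H f f' \<Longrightarrow> g \<in> carrier G \<Longrightarrow>
        coset_cong G H (reg_act G g f) (reg_act G g f')"

end

theory Submission
  imports Defs
begin


lemma isf_zero_sum: "(a::'k::idem_semifield) + b = 0 \<Longrightarrow> a = 0"
proof -
  assume h: "a + b = 0"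
  have "a = a + (a + b)" using h by simp
  also have "\<dots> = (a + a) + b" by (simp add: add.assoc)
  also have "\<dots> = 0" using h by (simp add: add_idem)
  finally show ?thesis .
qed

lemma isf_add_eq_0: "((a::'k::idem_semifield) + b = 0) \<longleftrightarrow> a = 0 \<and> b = 0"
proof
  assume h: "a + b = 0"
  have "b + a = 0" using h by (simp only: add.commute)
  then show "a = 0 \<and> b = 0" using h isf_zero_sum by blast
qed simp

lemma isf_sum_eq_0: "finite S \<Longrightarrow> (sum (f::_\<Rightarrow>'k::idem_semifield) S = 0) \<longleftrightarrow> (\<forall>x\<in>S. f x = 0)"
proof (induction S rule: finite_induct)
  case empty then show ?case by simp
next
  case (insert x S)
  then show ?case by (simp add: isf_add_eq_0)
qed

definition kinv :: "'k::idem_semifield \<Rightarrow> 'k" where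
  "kinv a = (SOME b. a * b = 1)"

lemma kinv: "(a::'k::idem_semifield) \<noteq> 0 \<Longrightarrow> a * kinv a = 1"
  unfolding kinv_def by (rule someI_ex) (rule mult_inverse_ex)

lemma kinv_nz: "(a::'k::idem_semifield) \<noteq> 0 \<Longrightarrow> kinv a \<noteq> 0"
  using kinv[of a] by auto

lemma isf_mult_eq_0: "((a::'k::idem_semifield) * b = 0) \<longleftrightarrow> a = 0 \<or> b = 0"
proof
  assume h: "a * b = 0"
  show "a = 0 \<or> b = 0"
  proof (rule ccontr)
    assume "\<not> (a = 0 \<or> b = 0)"
    then have "a \<noteq> 0" "b \<noteq> 0" by auto
    have "b = (kinv a * a) * b" using kinv[OF \<open>a \<noteq> 0\<close>] by (simp add: mult.commute)
    also have "\<dots> = 0" using h by (simp add: mult.assoc)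
    finally show False using \<open>b \<noteq> 0\<close> by simp
  qed
qed auto

lemma isf_cancel: "(s::'k::idem_semifield) \<noteq> 0 \<Longrightarrow> a * s = b * s \<Longrightarrow> a = b"
proof -
  assume s: "s \<noteq> 0" and h: "a * s = b * s"
  have "a = a * s * kinv s" using kinv[OF s] by (simp add: mult.assoc)
  also have "\<dots> = b * s * kinv s" using h by simp
  also have "\<dots> = b" using kinv[OF s] by (simp add: mult.assoc)
  finally show ?thesis .
qed

lemma isf_torsion: "(a::'k::idem_semifield) ^ n = 1 \<Longrightarrow> n > 0 \<Longrightarrow> a = 1"
proof -
  assume h: "a ^ n = 1" and n: "n > 0"
  define S where "S = (\<Sum>k<n. a ^ k)"
  have aS: "a * S = (\<Sum>k<n. a ^ Suc k)" unfolding S_def by (simp add: sum_distrib_left)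
  have "(\<Sum>k<n. a ^ Suc k) = (\<Sum>k<n. a ^ k)"
  proof -
    obtain m where m: "n = Suc m" using n by (cases n) auto
    have "(\<Sum>k<n. a ^ Suc k) = (\<Sum>k<m. a ^ Suc k) + a ^ n" by (simp add: m)
    also have "\<dots> = (\<Sum>k<m. a ^ Suc k) + a ^ 0" using h by simp
    also have "\<dots> = (\<Sum>k<Suc m. a ^ k)" by (simp only: sum.lessThan_Suc_shift power_0 add.commute)
    finally show ?thesis by (simp add: m)
  qed
  then have "a * S = 1 * S" using aS S_def by simp
  moreover have "S \<noteq> 0"
  proof
    assume "S = 0"
    then have "\<forall>k\<in>{..<n}. a ^ k = 0" using isf_sum_eq_0[of "{..<n}" "\<lambda>k. a ^ k"] unfolding S_def by simp
    then have "a ^ 0 = 0" using n by (meson lessThan_iff)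
    then show False by simp
  qed
  ultimately show ?thesis using isf_cancel by blast
qed



lemma lin_zero: "klinear L \<Longrightarrow> L (\<lambda>_. 0) = (\<lambda>_. 0)"
proof -
  assume "klinear L"
  then have "L (vsmult 0 (\<lambda>_. 0)) = vsmult 0 (L (\<lambda>_. 0))" unfolding klinear_def by blast
  then show ?thesis by (simp add: vsmult_def)
qed

lemma lin_comb:
  assumes L: "klinear L" and S: "finite S"
  shows "L (\<lambda>k. \<Sum>j\<in>S. a j * u j k) = (\<lambda>k. \<Sum>j\<in>S. a j * L (u j) k)"
  using S
proof (induction S rule: finite_induct)
  case empty then show ?case using lin_zero[OF L] by simp
next
  case (insert x S)
  have "(\<lambda>k. \<Sum>j\<in>insert x S. a j * u j k) = vadd (vsmult (a x) (u x)) (\<lambda>k. \<Sum>j\<in>S. a j * u j k)"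
    using insert by (simp add: vadd_def vsmult_def)
  then have "L (\<lambda>k. \<Sum>j\<in>insert x S. a j * u j k) = vadd (vsmult (a x) (L (u x))) (\<lambda>k. \<Sum>j\<in>S. a j * L (u j) k)"
    using L insert unfolding klinear_def by simp
  then show ?case using insert by (simp add: vadd_def vsmult_def)
qed

lemma vec_expand: "(v::'i::finite \<Rightarrow> 'k::semiring_1) = (\<lambda>k. \<Sum>j\<in>UNIV. v j * basis_elt j k)"
proof
  fix k
  have "(\<Sum>j\<in>UNIV. v j * basis_elt j k) = (\<Sum>j\<in>UNIV. if k = j then v j else 0)"
    by (rule sum.cong) (auto simp: basis_elt_def)
  then show "v k = (\<lambda>k. \<Sum>j\<in>UNIV. v j * basis_elt j k) k" by simp
qed

lemma lin_coord:
  assumes L: "klinear (L :: ('i::finite \<Rightarrow> 'k::semiring_1) \<Rightarrow> ('j \<Rightarrow> 'k))"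
  shows "L v k = (\<Sum>j\<in>UNIV. v j * L (basis_elt j) k)"
proof -
  have "L v = L (\<lambda>k. \<Sum>j\<in>UNIV. v j * basis_elt j k)" by (subst vec_expand) simp
  also have "\<dots> = (\<lambda>k. \<Sum>j\<in>UNIV. v j * L (basis_elt j) k)" by (rule lin_comb[OF L]) simp
  finally show ?thesis by simp
qed



lemma (in group) pow_one_ex:
  assumes fin: "finite (carrier G)" and h: "h \<in> carrier G"
  shows "\<exists>n>0. h [^] (n::nat) = \<one>"
proof -
  have "\<not> inj_on (\<lambda>n::nat. h [^] n) UNIV"
  proof
    assume "inj_on (\<lambda>n::nat. h [^] n) UNIV"
    moreover have "finite ((\<lambda>n::nat. h [^] n) ` UNIV)"
      using h by (intro finite_subset[OF _ fin]) auto
    ultimately have "finite (UNIV :: nat set)" using finite_imageD by blast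
    then show False by simp
  qed
  then obtain a b :: nat where ab: "a \<noteq> b" "h [^] a = h [^] b" unfolding inj_on_def by blast
  have key: "\<And>a b::nat. a < b \<Longrightarrow> h [^] a = h [^] b \<Longrightarrow> \<exists>n::nat>0. h [^] n = \<one>"
  proof -
    fix a b :: nat assume lt: "a < b" and eq: "h [^] a = h [^] b"
    have "h [^] a \<otimes> h [^] (b - a) = h [^] b" using nat_pow_mult[OF h] lt by simp
    then have "h [^] b = h [^] a \<otimes> h [^] (b - a)" by simp
    then have "h [^] a = h [^] a \<otimes> h [^] (b - a)" using eq by simp
    then have "h [^] (b - a) = \<one>" using h by simp
    then show "\<exists>n::nat>0. h [^] n = \<one>" using lt by (auto intro!: exI[of _ "b - a"])
  qed
  show ?thesis
  proof (cases "a < b")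
    case True then show ?thesis using key[OF True ab(2)] by simp
  next
    case False then have "b < a" using ab by simp
    then show ?thesis using key[OF _ ab(2)[symmetric]] by simp
  qed
qed

locale repctx = group G for G :: "('g, 'b) monoid_scheme" (structure) +
  fixes \<rho> :: "'g \<Rightarrow> ('n::finite \<Rightarrow> 'k::idem_semifield) \<Rightarrow> ('n \<Rightarrow> 'k)" and i0 :: 'n
  assumes fin: "finite (carrier G)" and rep: "is_rep G \<rho>"
begin

lemma rep_lin: "\<forall>g\<in>carrier G. klinear (\<rho> g)"
  using rep unfolding is_rep_def by (rule conjunct1)
lemma rep_one: "\<forall>v. \<rho> \<one> v = v"
  using rep unfolding is_rep_def by (rule conjunct1[OF conjunct2])
lemma rep_mult: "\<forall>g\<in>carrier G. \<forall>h\<in>carrier G. \<forall>v. \<rho> (g \<otimes> h) v = \<rho> g (\<rho> h v)"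
  using rep unfolding is_rep_def by (rule conjunct2[OF conjunct2])

lemma lin: "g \<in> carrier G \<Longrightarrow> klinear (\<rho> g)"
  using rep_lin by (rule bspec)

lemma rho_one: "\<rho> \<one> v = v"
  using rep_one by (rule spec)

lemma rho_mult: assumes "g \<in> carrier G" "h \<in> carrier G" shows "\<rho> (g \<otimes> h) v = \<rho> g (\<rho> h v)"
  using rep_mult assms by simp

lemma rho_inv1: "g \<in> carrier G \<Longrightarrow> \<rho> (inv g) (\<rho> g v) = v"
  using rho_mult[of "inv g" g v] by (simp add: rho_one)

lemma rho_inv2: "g \<in> carrier G \<Longrightarrow> \<rho> g (\<rho> (inv g) v) = v"
  using rho_mult[of g "inv g" v] by (simp add: rho_one)

lemma rho_smult: assumes g: "g \<in> carrier G" shows "\<rho> g (vsmult c v) = vsmult c (\<rho> g v)"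
  using lin[OF g] unfolding klinear_def by simp

lemma rho_zero: assumes g: "g \<in> carrier G" shows "\<rho> g (\<lambda>_. 0) = (\<lambda>_. 0)"
  by (rule lin_zero[OF lin[OF g]])

lemma rho_coord: assumes g: "g \<in> carrier G" shows "\<rho> g v k = (\<Sum>j\<in>UNIV. v j * \<rho> g (basis_elt j) k)"
  by (rule lin_coord[OF lin[OF g]])

lemma basis_nz: "basis_elt (j::'n) \<noteq> (\<lambda>_. 0::'k)"
proof
  assume "basis_elt j = (\<lambda>_. 0::'k)"
  then have "basis_elt j j = (0::'k)" by metis
  then show False by (simp add: basis_elt_def)
qed

definition w :: "'g \<Rightarrow> 'n \<Rightarrow> 'k" where "w g = \<rho> g (basis_elt i0)"

lemma w_nz: "g \<in> carrier G \<Longrightarrow> \<exists>k. w g k \<noteq> 0"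
proof (rule ccontr)
  assume g: "g \<in> carrier G" and "\<not> (\<exists>k. w g k \<noteq> 0)"
  then have "w g = (\<lambda>_. 0)" by auto
  then have "basis_elt i0 = \<rho> (inv g) (\<lambda>_. 0)" using rho_inv1[OF g] unfolding w_def by metis
  then show False using rho_zero[of "inv g"] g basis_nz[of i0] by simp
qed

lemma w_mono:
  assumes g: "g \<in> carrier G" and k: "w g k \<noteq> 0"
  shows "\<exists>d. d \<noteq> 0 \<and> w g = vsmult d (basis_elt k)"
proof -
  have ig: "inv g \<in> carrier G" using g by simp
  have M0: "\<rho> (inv g) (basis_elt k) j = 0" if j: "j \<noteq> i0" for j
  proof -
    have "0 = (basis_elt i0 :: 'n \<Rightarrow> 'k) j" using j by (simp add: basis_elt_def)
    also have "\<dots> = \<rho> (inv g) (w g) j" unfolding w_def using rho_inv1[OF g] by simp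
    also have "\<dots> = (\<Sum>m\<in>UNIV. w g m * \<rho> (inv g) (basis_elt m) j)" by (rule rho_coord[OF ig])
    finally have "(\<Sum>m\<in>UNIV. w g m * \<rho> (inv g) (basis_elt m) j) = 0" by simp
    then have "\<forall>m\<in>UNIV. w g m * \<rho> (inv g) (basis_elt m) j = 0"
      using isf_sum_eq_0[of UNIV "\<lambda>m. w g m * \<rho> (inv g) (basis_elt m) j"] by simp
    then have "w g k * \<rho> (inv g) (basis_elt k) j = 0" by simp
    then show ?thesis using k isf_mult_eq_0 by blast
  qed
  define b where "b = \<rho> (inv g) (basis_elt k) i0"
  have Mk: "\<rho> (inv g) (basis_elt k) = vsmult b (basis_elt i0)"
  proof
    fix j show "\<rho> (inv g) (basis_elt k) j = vsmult b (basis_elt i0) j"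
      using M0[of j] by (cases "j = i0") (auto simp: vsmult_def basis_elt_def b_def)
  qed
  have ek: "basis_elt k = vsmult b (w g)"
    using rho_inv2[OF g, of "basis_elt k"] unfolding Mk w_def using rho_smult[OF g] by simp
  have bnz: "b \<noteq> 0"
  proof
    assume "b = 0"
    then have "basis_elt k = (\<lambda>_. 0::'k)" using ek by (simp add: vsmult_def)
    then show False using basis_nz[of k] by simp
  qed
  have kl: "kinv b * b = 1" using kinv[OF bnz] by (simp add: mult.commute)
  have "vsmult (kinv b) (basis_elt k) = vsmult (kinv b) (vsmult b (w g))" using ek by simp
  also have "\<dots> = w g" unfolding vsmult_def by (simp add: mult.assoc[symmetric] kl)
  finally have "vsmult (kinv b) (basis_elt k) = w g" .
  then show ?thesis using kinv_nz[OF bnz] by auto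
qed

definition sig :: "'g \<Rightarrow> 'n" where "sig g = (SOME k. w g k \<noteq> 0)"
definition cf :: "'g \<Rightarrow> 'k" where "cf g = w g (sig g)"

lemma w_form:
  assumes g: "g \<in> carrier G"
  shows "cf g \<noteq> 0" "w g = vsmult (cf g) (basis_elt (sig g))"
    "w g k = (if k = sig g then cf g else 0)"
proof -
  have s: "w g (sig g) \<noteq> 0" unfolding sig_def using w_nz[OF g] by (rule someI_ex)
  then show "cf g \<noteq> 0" by (simp add: cf_def)
  obtain d where d: "d \<noteq> 0" "w g = vsmult d (basis_elt (sig g))" using w_mono[OF g s] by blast
  then have "cf g = d" unfolding cf_def by (simp add: vsmult_def basis_elt_def)
  then show wf: "w g = vsmult (cf g) (basis_elt (sig g))" using d by simp
  show "w g k = (if k = sig g then cf g else 0)"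
    by (subst wf) (simp add: vsmult_def basis_elt_def)
qed

lemma w_one: "w \<one> = basis_elt i0"
  unfolding w_def by (simp add: rho_one)

lemma sig_one: "sig \<one> = i0"
proof -
  have "w \<one> i0 \<noteq> 0" by (simp add: w_one basis_elt_def)
  then show ?thesis using w_form(3)[of \<one> i0] by (auto split: if_splits)
qed

lemma w_mult: "g \<in> carrier G \<Longrightarrow> h \<in> carrier G \<Longrightarrow> w (g \<otimes> h) = \<rho> g (w h)"
  unfolding w_def by (simp add: rho_mult)

lemma w_pow:
  assumes h: "h \<in> carrier G" and wh: "w h = vsmult c (basis_elt i0)"
  shows "w (h [^] (n::nat)) = vsmult (c ^ n) (basis_elt i0)"
proof (induction n)
  case 0 then show ?case by (simp add: w_one vsmult_def)
next
  case (Suc n)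
  have "w (h [^] Suc n) = \<rho> (h [^] n) (w h)" using h by (simp add: w_def rho_mult)
  also have "\<dots> = vsmult c (w (h [^] n))" using h wh by (simp add: rho_smult w_def)
  also have "\<dots> = vsmult (c ^ Suc n) (basis_elt i0)" using Suc by (simp add: vsmult_def mult.assoc)
  finally show ?case .
qed

lemma torsion:
  assumes h: "h \<in> carrier G" and wh: "w h = vsmult c (basis_elt i0)"
  shows "c = 1"
proof -
  obtain n :: nat where n: "n > 0" "h [^] n = \<one>" using pow_one_ex[OF fin h] by blast
  have "vsmult (c ^ n) (basis_elt i0) = basis_elt i0" using w_pow[OF h wh, of n] n w_one by simp
  then have "c ^ n * 1 = 1" unfolding vsmult_def basis_elt_def by metis
  then show ?thesis using isf_torsion n by simp
qed

definition Hs :: "'g set" where "Hs = {h \<in> carrier G. w h = basis_elt i0}"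

lemma Hs_sub: "subgroup Hs G"
proof (rule subgroupI)
  show "Hs \<subseteq> carrier G" unfolding Hs_def by auto
  show "Hs \<noteq> {}" using w_one unfolding Hs_def by auto
  fix a b assume a: "a \<in> Hs"
  then show "inv a \<in> Hs" unfolding Hs_def using rho_inv1[of a "basis_elt i0"]
    by (auto simp: w_def)
  assume b: "b \<in> Hs"
  then show "a \<otimes> b \<in> Hs" using a unfolding Hs_def by (auto simp: w_def rho_mult)
qed

end


context repctx begin

lemma e_sig: assumes g: "g \<in> carrier G"
  shows "basis_elt (sig g) = vsmult (kinv (cf g)) (w g)"
proof -
  have nz: "cf g \<noteq> 0" using w_form(1)[OF g] .
  have kl: "kinv (cf g) * cf g = 1" using kinv[OF nz] by (simp add: mult.commute)
  have "vsmult (kinv (cf g)) (w g) = vsmult (kinv (cf g)) (vsmult (cf g) (basis_elt (sig g)))"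
    using w_form(2)[OF g] by simp
  also have "\<dots> = basis_elt (sig g)" unfolding vsmult_def by (simp add: mult.assoc[symmetric] kl)
  finally show ?thesis by simp
qed

lemma rho_e_sig: assumes x: "x \<in> carrier G" and g: "g \<in> carrier G"
  shows "\<rho> x (basis_elt (sig g)) k = kinv (cf g) * (if k = sig (x \<otimes> g) then cf (x \<otimes> g) else 0)"
proof -
  have "\<rho> x (basis_elt (sig g)) = vsmult (kinv (cf g)) (\<rho> x (w g))"
    using e_sig[OF g] rho_smult[OF x] by simp
  also have "\<rho> x (w g) = w (x \<otimes> g)" using w_mult[OF x g] by simp
  finally show ?thesis using w_form(3)[of "x \<otimes> g" k] x g by (simp add: vsmult_def)
qed

lemma transitive:
  assumes ind: "indecomposable G \<rho>"
  shows "\<exists>g\<in>carrier G. sig g = j"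
proof (rule ccontr)
  assume nj: "\<not> (\<exists>g\<in>carrier G. sig g = j)"
  define Orb where "Orb = sig ` carrier G"
  have jO: "j \<notin> Orb" using nj unfolding Orb_def by auto
  have i0O: "i0 \<in> Orb" unfolding Orb_def using sig_one by force
  have sigO: "\<And>g. g \<in> carrier G \<Longrightarrow> sig g \<in> Orb" unfolding Orb_def by simp
  define U :: "('n \<Rightarrow> 'k) set" where "U = {v. \<forall>k. k \<notin> Orb \<longrightarrow> v k = 0}"
  define W :: "('n \<Rightarrow> 'k) set" where "W = {v. \<forall>k. k \<in> Orb \<longrightarrow> v k = 0}"
  have subU: "is_submodule U" unfolding is_submodule_def U_def by (simp add: vadd_def vsmult_def)
  have subW: "is_submodule W" unfolding is_submodule_def W_def by (simp add: vadd_def vsmult_def)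
  have stU: "G_stable G \<rho> U" unfolding G_stable_def
  proof (intro ballI)
    fix x u assume x: "x \<in> carrier G" and u: "u \<in> U"
    show "\<rho> x u \<in> U" unfolding U_def
    proof (intro CollectI allI impI)
      fix k assume k: "k \<notin> Orb"
      have "\<rho> x u k = (\<Sum>j\<in>UNIV. u j * \<rho> x (basis_elt j) k)" by (rule rho_coord[OF x])
      also have "\<dots> = (\<Sum>j\<in>(UNIV::'n set). (0::'k))"
      proof (rule sum.cong[OF HOL.refl])
        fix j
        show "u j * \<rho> x (basis_elt j) k = 0"
        proof (cases "j \<in> Orb")
          case True
          then obtain g where g: "g \<in> carrier G" "j = sig g" unfolding Orb_def by auto
          have "sig (x \<otimes> g) \<in> Orb" using sigO x g by simp
          then have "k \<noteq> sig (x \<otimes> g)" using k by auto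
          then show ?thesis using rho_e_sig[OF x g(1), of k] g(2) by simp
        next
          case False then show ?thesis using u unfolding U_def by simp
        qed
      qed
      finally show "\<rho> x u k = 0" by simp
    qed
  qed
  have stW: "G_stable G \<rho> W" unfolding G_stable_def
  proof (intro ballI)
    fix x u assume x: "x \<in> carrier G" and u: "u \<in> W"
    have ix: "inv x \<in> carrier G" using x by simp
    show "\<rho> x u \<in> W" unfolding W_def
    proof (intro CollectI allI impI)
      fix k assume k: "k \<in> Orb"
      then obtain g' where g': "g' \<in> carrier G" "k = sig g'" unfolding Orb_def by auto
      define y where "y = \<rho> x u"
      show "\<rho> x u k = 0"
      proof (rule ccontr)
        assume yk: "\<rho> x u k \<noteq> 0"
        define p where "p = sig (inv x \<otimes> g')"
        have pO: "p \<in> Orb" unfolding p_def using sigO ix g' by simp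
        have "0 = u p" using u pO unfolding W_def by simp
        also have "u p = \<rho> (inv x) y p" unfolding y_def using rho_inv1[OF x] by simp
        also have "\<dots> = (\<Sum>m\<in>UNIV. y m * \<rho> (inv x) (basis_elt m) p)" by (rule rho_coord[OF ix])
        finally have "(\<Sum>m\<in>UNIV. y m * \<rho> (inv x) (basis_elt m) p) = 0" by simp
        then have "\<forall>m\<in>UNIV. y m * \<rho> (inv x) (basis_elt m) p = 0"
          using isf_sum_eq_0[of UNIV "\<lambda>m. y m * \<rho> (inv x) (basis_elt m) p"] by simp
        then have z: "y k * \<rho> (inv x) (basis_elt k) p = 0" by simp
        have "\<rho> (inv x) (basis_elt k) p = kinv (cf g') * cf (inv x \<otimes> g')"
          using rho_e_sig[OF ix g'(1), of p] g'(2) p_def by simp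
        moreover have "kinv (cf g') \<noteq> 0" using kinv_nz w_form(1) g' by blast
        moreover have "cf (inv x \<otimes> g') \<noteq> 0" using w_form(1) ix g' by simp
        moreover have "y k \<noteq> 0" using yk y_def by simp
        ultimately show False using z isf_mult_eq_0 by metis
      qed
    qed
  qed
  have Unz: "U \<noteq> {\<lambda>_. 0}"
  proof
    assume "U = {\<lambda>_. 0}"
    moreover have "basis_elt i0 \<in> U" unfolding U_def using i0O by (auto simp: basis_elt_def)
    ultimately show False using basis_nz[of i0] by simp
  qed
  have Wnz: "W \<noteq> {\<lambda>_. 0}"
  proof
    assume "W = {\<lambda>_. 0}"
    moreover have "basis_elt j \<in> W" unfolding W_def using jO by (auto simp: basis_elt_def)
    ultimately show False using basis_nz[of j] by simp
  qed
  have dec: "\<forall>v. \<exists>u\<in>U. \<exists>w\<in>W. v = vadd u w"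
  proof
    fix v :: "'n \<Rightarrow> 'k"
    have "(\<lambda>k. if k \<in> Orb then v k else 0) \<in> U" unfolding U_def by simp
    moreover have "(\<lambda>k. if k \<in> Orb then 0 else v k) \<in> W" unfolding W_def by simp
    moreover have "v = vadd (\<lambda>k. if k \<in> Orb then v k else 0) (\<lambda>k. if k \<in> Orb then 0 else v k)"
      unfolding vadd_def by auto
    ultimately show "\<exists>u\<in>U. \<exists>w\<in>W. v = vadd u w" by blast
  qed
  have uniq: "\<forall>u\<in>U. \<forall>u'\<in>U. \<forall>w\<in>W. \<forall>w'\<in>W. vadd u w = vadd u' w' \<longrightarrow> u = u' \<and> w = w'"
  proof (intro ballI impI)
    fix u u' w w' assume u: "u \<in> U" and u': "u' \<in> U" and w: "w \<in> W" and w': "w' \<in> W"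
      and e: "vadd u w = vadd u' w'"
    have ek: "u k + w k = u' k + w' k" for k using e unfolding vadd_def by metis
    have "u = u'"
    proof
      fix k show "u k = u' k"
        using ek[of k] u u' w w' unfolding U_def W_def by (cases "k \<in> Orb") auto
    qed
    moreover have "w = w'"
    proof
      fix k show "w k = w' k"
        using ek[of k] u u' w w' unfolding U_def W_def by (cases "k \<in> Orb") auto
    qed
    ultimately show "u = u' \<and> w = w'" by simp
  qed
  show False using ind subU subW stU stW Unz Wnz dec uniq unfolding indecomposable_def by blast
qed

end



lemma cong_in:
  assumes "coset_cong G H f f'" and G: "group G" and HG: "H \<subseteq> carrier G"
  shows "f \<in> group_alg G \<and> f' \<in> group_alg G"
  using assms(1)
proof (induction rule: coset_cong.induct)
  case (gen g h)
  have hc: "h \<in> carrier G" using gen(2) HG by (rule subsetD[rotated])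
  have "g \<otimes>\<^bsub>G\<^esub> h \<in> carrier G" by (rule monoid.m_closed[OF group.is_monoid[OF G] gen(1) hc])
  then show ?case using gen unfolding group_alg_def basis_elt_def by auto
next
  case (add f f' e) then show ?case unfolding group_alg_def vadd_def by auto
next
  case (smult f f' c) then show ?case unfolding group_alg_def vsmult_def by auto
next
  case (act f f' g) then show ?case unfolding group_alg_def reg_act_def by auto
qed auto

lemma vadd_comm: "vadd (a::'x \<Rightarrow> 'k::comm_semiring_1) b = vadd b a"
  unfolding vadd_def by (simp add: add.commute)

lemma cong_add2:
  assumes a: "coset_cong G H (a::'g \<Rightarrow> 'k::semiring_1) a'" and b: "coset_cong G H b b'"
    and G: "group G" and HG: "H \<subseteq> carrier G"
  shows "coset_cong G H (vadd a b) (vadd a' b')"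
proof -
  have bin: "b \<in> group_alg G" "b' \<in> group_alg G" using cong_in[OF b G HG] by auto
  have a'in: "a' \<in> group_alg G" using cong_in[OF a G HG] by auto
  have 1: "coset_cong G H (vadd a b) (vadd a' b)" by (rule coset_cong.add[OF a bin(1)])
  have 2: "coset_cong G H (vadd b a') (vadd b' a')" by (rule coset_cong.add[OF b a'in])
  have vc: "vadd x y = vadd y x" for x y :: "'g \<Rightarrow> 'k"
    unfolding vadd_def by (simp add: add.commute)
  have "coset_cong G H (vadd a' b) (vadd a' b')" using 2 unfolding vc[of b a'] vc[of b' a'] .
  then show ?thesis by (rule coset_cong.trans[OF 1])
qed

lemma cong_lincomb:
  assumes S: "finite S" and ab: "\<forall>g\<in>S. coset_cong G H (a g) (b g :: 'g \<Rightarrow> 'k::semiring_1)"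
    and G: "group G" and HG: "H \<subseteq> carrier G"
  shows "coset_cong G H (\<lambda>x. \<Sum>g\<in>S. c g * a g x) (\<lambda>x. \<Sum>g\<in>S. c g * b g x)"
  using S ab
proof (induction S rule: finite_induct)
  case empty
  have "(\<lambda>x. 0::'k) \<in> group_alg G" unfolding group_alg_def by simp
  then show ?case using coset_cong.refl by simp
next
  case (insert y S)
  have e1: "(\<lambda>x. \<Sum>g\<in>insert y S. c g * a g x) = vadd (vsmult (c y) (a y)) (\<lambda>x. \<Sum>g\<in>S. c g * a g x)"
    using insert by (simp add: vadd_def vsmult_def)
  have e2: "(\<lambda>x. \<Sum>g\<in>insert y S. c g * b g x) = vadd (vsmult (c y) (b y)) (\<lambda>x. \<Sum>g\<in>S. c g * b g x)"
    using insert by (simp add: vadd_def vsmult_def)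
  have "coset_cong G H (vsmult (c y) (a y)) (vsmult (c y) (b y))"
    by (rule coset_cong.smult) (use insert in simp)
  moreover have "coset_cong G H (\<lambda>x. \<Sum>g\<in>S. c g * a g x) (\<lambda>x. \<Sum>g\<in>S. c g * b g x)"
    using insert by simp
  ultimately show ?case unfolding e1 e2 by (rule cong_add2[OF _ _ G HG])
qed

locale repctx2 = repctx G \<rho> i0 for G :: "('g, 'b) monoid_scheme" (structure)
  and \<rho> :: "'g \<Rightarrow> ('n::finite \<Rightarrow> 'k::idem_semifield) \<Rightarrow> ('n \<Rightarrow> 'k)" and i0 :: 'n +
  assumes trans_ax: "\<forall>j::'n. \<exists>g\<in>carrier G. sig g = j"
begin

definition tau :: "'n \<Rightarrow> 'g" where "tau j = (SOME g. g \<in> carrier G \<and> sig g = j)"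

lemma tau: "tau j \<in> carrier G" "sig (tau j) = j"
proof -
  have "\<exists>g. g \<in> carrier G \<and> sig g = j" using trans_ax by blast
  then have "tau j \<in> carrier G \<and> sig (tau j) = j" unfolding tau_def by (rule someI_ex)
  then show "tau j \<in> carrier G" "sig (tau j) = j" by auto
qed

lemma coset:
  assumes g: "g \<in> carrier G"
  shows "inv (tau (sig g)) \<otimes> g \<in> Hs" "cf g = cf (tau (sig g))"
proof -
  define t where "t = tau (sig g)"
  have t: "t \<in> carrier G" "sig t = sig g" unfolding t_def using tau by auto
  have it: "inv t \<in> carrier G" using t by simp
  have ctnz: "cf t \<noteq> 0" using w_form(1)[OF t(1)] .
  have "w (inv t \<otimes> g) = \<rho> (inv t) (w g)" using w_mult[OF it g] .
  also have "\<dots> = \<rho> (inv t) (vsmult (cf g) (basis_elt (sig t)))" using w_form(2)[OF g] t(2) by simp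
  also have "\<dots> = vsmult (cf g) (\<rho> (inv t) (vsmult (kinv (cf t)) (w t)))"
    using rho_smult[OF it] e_sig[OF t(1)] by simp
  also have "\<dots> = vsmult (cf g) (vsmult (kinv (cf t)) (basis_elt i0))"
    using rho_smult[OF it] rho_inv1[OF t(1)] unfolding w_def by simp
  also have "\<dots> = vsmult (cf g * kinv (cf t)) (basis_elt i0)"
    unfolding vsmult_def by (simp add: mult.assoc)
  finally have wf: "w (inv t \<otimes> g) = vsmult (cf g * kinv (cf t)) (basis_elt i0)" .
  have c1: "cf g * kinv (cf t) = 1" using torsion[OF _ wf] it g by simp
  then have "w (inv t \<otimes> g) = basis_elt i0" using wf by (simp add: vsmult_def)
  then show "inv (tau (sig g)) \<otimes> g \<in> Hs" unfolding Hs_def t_def[symmetric] using it g by simp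
  have "cf g * kinv (cf t) = cf t * kinv (cf t)" using c1 kinv[OF ctnz] by simp
  then show "cf g = cf (tau (sig g))" using isf_cancel[OF kinv_nz[OF ctnz]] t_def by simp
qed

definition phi :: "('g \<Rightarrow> 'k) \<Rightarrow> ('n \<Rightarrow> 'k)" where
  "phi f = (\<lambda>k. \<Sum>g\<in>carrier G. f g * w g k)"

lemma phi_add: "phi (vadd f f') = vadd (phi f) (phi f')"
  unfolding phi_def vadd_def by (simp add: sum.distrib distrib_right)

lemma phi_smult: "phi (vsmult c f) = vsmult c (phi f)"
  unfolding phi_def vsmult_def by (simp add: sum_distrib_left mult.assoc)

lemma phi_basis: assumes g: "g \<in> carrier G" shows "phi (basis_elt g) = w g"
proof
  fix k
  have "phi (basis_elt g) k = (\<Sum>x\<in>carrier G. if x = g then w g k else 0)"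
    unfolding phi_def by (rule sum.cong) (auto simp: basis_elt_def)
  also have "\<dots> = w g k" using g fin by simp
  finally show "phi (basis_elt g) k = w g k" .
qed

lemma mult_bij: assumes x: "x \<in> carrier G" shows "bij_betw (\<lambda>g. x \<otimes> g) (carrier G) (carrier G)"
proof (rule bij_betw_byWitness[where f' = "\<lambda>g. inv x \<otimes> g"])
  show "\<forall>a\<in>carrier G. inv x \<otimes> (x \<otimes> a) = a" using x by (simp add: m_assoc[symmetric])
  show "\<forall>a\<in>carrier G. x \<otimes> (inv x \<otimes> a) = a" using x by (simp add: m_assoc[symmetric])
  show "(\<otimes>) x ` carrier G \<subseteq> carrier G" using x by auto
  show "(\<otimes>) (inv x) ` carrier G \<subseteq> carrier G" using x by auto
qed

lemma phi_act: assumes x: "x \<in> carrier G" shows "phi (reg_act G x f) = \<rho> x (phi f)"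
proof -
  have "\<rho> x (phi f) = (\<lambda>k. \<Sum>g\<in>carrier G. f g * \<rho> x (w g) k)"
    unfolding phi_def by (rule lin_comb[OF lin[OF x] fin])
  also have "\<dots> = (\<lambda>k. \<Sum>g\<in>carrier G. f g * w (x \<otimes> g) k)"
    using w_mult[OF x] by simp
  finally have r: "\<rho> x (phi f) = (\<lambda>k. \<Sum>g\<in>carrier G. f g * w (x \<otimes> g) k)" .
  show ?thesis
  proof
    fix k
    have "phi (reg_act G x f) k = (\<Sum>g\<in>carrier G. f (inv x \<otimes> g) * w g k)"
      unfolding phi_def reg_act_def by (rule sum.cong) auto
    also have "\<dots> = (\<Sum>g\<in>carrier G. f (inv x \<otimes> (x \<otimes> g)) * w (x \<otimes> g) k)"
      by (rule sum.reindex_bij_betw[OF mult_bij[OF x], symmetric])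
    also have "\<dots> = (\<Sum>g\<in>carrier G. f g * w (x \<otimes> g) k)"
      by (rule sum.cong) (auto simp: x m_assoc[symmetric])
    finally show "phi (reg_act G x f) k = \<rho> x (phi f) k" using r by simp
  qed
qed

definition Fib :: "('g \<Rightarrow> 'k) \<Rightarrow> 'n \<Rightarrow> 'k" where
  "Fib f k = (\<Sum>g\<in>{g\<in>carrier G. sig g = k}. f g)"

lemma phi_form: "phi f k = Fib f k * cf (tau k)"
proof -
  have "phi f k = (\<Sum>g\<in>carrier G. if sig g = k then f g * cf (tau k) else 0)"
    unfolding phi_def
  proof (rule sum.cong[OF HOL.refl])
    fix g assume g: "g \<in> carrier G"
    show "f g * w g k = (if sig g = k then f g * cf (tau k) else 0)"
      using w_form(3)[OF g, of k] coset(2)[OF g] by auto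
  qed
  also have "\<dots> = (\<Sum>g\<in>{g\<in>carrier G. sig g = k}. f g * cf (tau k))"
    using fin by (simp add: sum.inter_filter)
  also have "\<dots> = Fib f k * cf (tau k)" unfolding Fib_def by (simp add: sum_distrib_right)
  finally show ?thesis .
qed

definition Nf :: "('g \<Rightarrow> 'k) \<Rightarrow> 'g \<Rightarrow> 'k" where
  "Nf f = (\<lambda>x. \<Sum>g\<in>carrier G. f g * basis_elt (tau (sig g)) x)"

lemma Nf_Fib: "Nf f x = (\<Sum>k\<in>UNIV. if tau k = x then Fib f k else 0)"
proof -
  have "Nf f x = (\<Sum>g\<in>carrier G. if tau (sig g) = x then f g else 0)"
    unfolding Nf_def by (rule sum.cong) (auto simp: basis_elt_def)
  also have "\<dots> = (\<Sum>k\<in>UNIV. \<Sum>g\<in>{g\<in>carrier G. sig g = k}. if tau (sig g) = x then f g else 0)"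
    by (rule sum.group[symmetric]) (auto simp: fin)
  also have "\<dots> = (\<Sum>k\<in>UNIV. if tau k = x then Fib f k else 0)"
    unfolding Fib_def by (rule sum.cong) auto
  finally show ?thesis .
qed

lemma f_expand: fixes f :: "'g \<Rightarrow> 'k" assumes f: "f \<in> group_alg G"
  shows "f = (\<lambda>x. \<Sum>g\<in>carrier G. f g * basis_elt g x)"
proof
  fix x
  show "f x = (\<lambda>x. \<Sum>g\<in>carrier G. f g * basis_elt g x) x"
  proof (cases "x \<in> carrier G")
    case True
    have "(\<Sum>g\<in>carrier G. f g * basis_elt g x) = (\<Sum>g\<in>carrier G. if g = x then f x else 0)"
      by (rule sum.cong) (auto simp: basis_elt_def)
    then show ?thesis using True fin by simp
  next
    case False
    then have "(\<Sum>g\<in>carrier G. f g * basis_elt g x) = 0"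
      by (intro sum.neutral) (auto simp: basis_elt_def)
    then show ?thesis using False f unfolding group_alg_def by simp
  qed
qed

lemma Hs_carrier: "Hs \<subseteq> carrier G" unfolding Hs_def by auto

lemma f_Nf: assumes f: "f \<in> group_alg G" shows "coset_cong G Hs f (Nf f)"
proof -
  have "\<forall>g\<in>carrier G. coset_cong G Hs (basis_elt g :: 'g \<Rightarrow> 'k) (basis_elt (tau (sig g)))"
  proof
    fix g assume g: "g \<in> carrier G"
    define t where "t = tau (sig g)"
    have t: "t \<in> carrier G" unfolding t_def using tau by simp
    have h: "inv t \<otimes> g \<in> Hs" using coset(1)[OF g] t_def by simp
    have "coset_cong G Hs (basis_elt t :: 'g \<Rightarrow> 'k) (basis_elt (t \<otimes> (inv t \<otimes> g)))"
      by (rule coset_cong.gen[OF t h])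
    moreover have "t \<otimes> (inv t \<otimes> g) = g" using t g by (simp add: m_assoc[symmetric])
    ultimately have "coset_cong G Hs (basis_elt t :: 'g \<Rightarrow> 'k) (basis_elt g)" by simp
    then show "coset_cong G Hs (basis_elt g :: 'g \<Rightarrow> 'k) (basis_elt (tau (sig g)))"
      using coset_cong.sym t_def by blast
  qed
  then have "coset_cong G Hs (\<lambda>x. \<Sum>g\<in>carrier G. f g * basis_elt g x) (Nf f)"
    unfolding Nf_def by (rule cong_lincomb[OF fin _ is_group Hs_carrier])
  then show ?thesis using f_expand[OF f] by simp
qed

lemma kernel1: assumes "coset_cong G Hs f f'" shows "phi f = phi f'"
  using assms
proof (induction rule: coset_cong.induct)
  case (gen g h)
  have h: "h \<in> carrier G" "w h = basis_elt i0" using gen(2) unfolding Hs_def by auto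
  have "phi (basis_elt (g \<otimes> h)) = w (g \<otimes> h)" using phi_basis gen(1) h(1) by simp
  also have "\<dots> = \<rho> g (w h)" using w_mult gen(1) h(1) by simp
  also have "\<dots> = w g" using h(2) unfolding w_def by simp
  finally show ?case using phi_basis[OF gen(1)] by simp
next
  case (add f f' e) then show ?case by (simp add: phi_add)
next
  case (smult f f' c) then show ?case by (simp add: phi_smult)
next
  case (act f f' g) then show ?case by (simp add: phi_act)
qed auto

lemma kernel2: assumes f: "f \<in> group_alg G" and f': "f' \<in> group_alg G" and e: "phi f = phi f'"
  shows "coset_cong G Hs f f'"
proof -
  have FF: "Fib f k = Fib f' k" for k
  proof -
    have "Fib f k * cf (tau k) = Fib f' k * cf (tau k)" using phi_form[of f k] phi_form[of f' k] e by simp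
    then show ?thesis by (rule isf_cancel[OF w_form(1)[OF tau(1)]])
  qed
  have NN: "Nf f = Nf f'" by (rule ext) (simp only: Nf_Fib FF)
  have "coset_cong G Hs (Nf f) f'" using coset_cong.sym[OF f_Nf[OF f']] NN by simp
  then show ?thesis by (rule coset_cong.trans[OF f_Nf[OF f]])
qed

lemma surj: "\<exists>f\<in>group_alg G. phi f = v"
proof -
  define f where "f = (\<lambda>g. if g \<in> carrier G \<and> g = tau (sig g) then v (sig g) * kinv (cf g) else 0)"
  have fin_ga: "f \<in> group_alg G" unfolding f_def group_alg_def by simp
  have "phi f = v"
  proof
    fix k
    have "phi f k = (\<Sum>g\<in>carrier G. if g = tau k then v k else 0)"
      unfolding phi_def
    proof (rule sum.cong[OF HOL.refl])
      fix g assume g: "g \<in> carrier G"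
      show "f g * w g k = (if g = tau k then v k else 0)"
      proof (cases "g = tau k")
        case True
        then have sg: "sig g = k" using tau by simp
        have "cf g \<noteq> 0" using w_form(1)[OF g] .
        then have "kinv (cf g) * cf g = 1" using kinv by (simp add: mult.commute)
        then show ?thesis using True sg g w_form(3)[OF g, of k]
          unfolding f_def by (simp add: mult.assoc)
      next
        case False
        show ?thesis
        proof (cases "sig g = k")
          case True
          then have "f g = 0" using False unfolding f_def by auto
          then show ?thesis using False by simp
        next
          case F2: False
          then show ?thesis using False w_form(3)[OF g, of k] by auto
        qed
      qed
    qed
    also have "\<dots> = v k" using tau(1) fin by simp
    finally show "phi f k = v k" .
  qed
  then show ?thesis using fin_ga by blast
qed

end



theorem lemma3p17:
  fixes G :: "('g, 'b) monoid_scheme"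
    and \<rho> :: "'g \<Rightarrow> ('n::finite \<Rightarrow> 'k::idem_semifield) \<Rightarrow> ('n \<Rightarrow> 'k)"
  assumes "group G" and "finite (carrier G)"
    and "is_rep G \<rho>" and "indecomposable G \<rho>"
  shows "\<exists>H. subgroup H G \<and>
           (\<exists>\<phi> :: ('g \<Rightarrow> 'k) \<Rightarrow> ('n \<Rightarrow> 'k).
              (\<forall>f\<in>group_alg G. \<forall>f'\<in>group_alg G. \<phi> (vadd f f') = vadd (\<phi> f) (\<phi> f')) \<and>
              (\<forall>c. \<forall>f\<in>group_alg G. \<phi> (vsmult c f) = vsmult c (\<phi> f)) \<and>
              (\<forall>g\<in>carrier G. \<forall>f\<in>group_alg G. \<phi> (reg_act G g f) = \<rho> g (\<phi> f)) \<and>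
              \<phi> ` group_alg G = UNIV \<and>
              (\<forall>f\<in>group_alg G. \<forall>f'\<in>group_alg G. \<phi> f = \<phi> f' \<longleftrightarrow> coset_cong G H f f'))"
proof -
  have RR: "repctx G \<rho>" using assms(1,2,3) unfolding repctx_def repctx_axioms_def by simp
  interpret R: repctx G \<rho> "undefined::'n" by (rule RR)
  have tr: "\<forall>j::'n. \<exists>g\<in>carrier G. R.sig g = j" using R.transitive[OF assms(4)] by simp
  have RR2: "repctx2 G \<rho> (undefined::'n)"
    unfolding repctx2_def repctx2_axioms_def using RR tr by simp
  interpret R2: repctx2 G \<rho> "undefined::'n" by (rule RR2)
  have A1: "\<forall>f\<in>group_alg G. \<forall>f'\<in>group_alg G. R2.phi (vadd f f') = vadd (R2.phi f) (R2.phi f')"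
    by (simp add: R2.phi_add)
  have A2: "\<forall>c. \<forall>f\<in>group_alg G. R2.phi (vsmult c f) = vsmult c (R2.phi f)"
    by (simp add: R2.phi_smult)
  have A3: "\<forall>g\<in>carrier G. \<forall>f\<in>group_alg G. R2.phi (reg_act G g f) = \<rho> g (R2.phi f)"
    by (simp add: R2.phi_act)
  have A4v: "v \<in> R2.phi ` group_alg G" for v
  proof -
    obtain f where "f \<in> group_alg G" "R2.phi f = v" using R2.surj[of v] by blast
    then show ?thesis by (auto intro: image_eqI)
  qed
  have A4: "R2.phi ` group_alg G = UNIV" using A4v by auto
  have A5: "\<forall>f\<in>group_alg G. \<forall>f'\<in>group_alg G. R2.phi f = R2.phi f' \<longleftrightarrow> coset_cong G R.Hs f f'"
  proof (intro ballI iffI)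
    fix f f' :: "'g \<Rightarrow> 'k" assume "f \<in> group_alg G" "f' \<in> group_alg G" "R2.phi f = R2.phi f'"
    then show "coset_cong G R.Hs f f'" by (rule R2.kernel2)
  next
    fix f f' :: "'g \<Rightarrow> 'k" assume "coset_cong G R.Hs f f'"
    then show "R2.phi f = R2.phi f'" by (rule R2.kernel1)
  qed
  show ?thesis
    using R.Hs_sub A1 A2 A3 A4 A5 by blast
qed

end
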